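(* Let $n\ge 1$ and $k\ge 3$ be integers. The number of vertices of the $k$-Pell graph $\Pi_{n,k}$ of degree $\Delta(\Pi_{n,k})-1=2n-1$ equals $$n\,(k-2)^{n-1}+\sum_{\ell=1}^{n}(n-\ell+1)\,(k-2)^{n-\ell}.$$
   Context: For an integer $k\ge 2$, a $k$-Pell string is a finite word over the alphabet $\{0,1,\ldots,k-1,kk\}$, i.e. a word over $\{0,1,\ldots,k\}$ in which every maximal run of the letter $k$ has even length. For $n\ge 0$, the $k$-Pell graph $\Pi_{n,k}$ has as vertices all $k$-Pell strings of length $n$, and two vertices are adjacent if one is obtained from the other either by replacing a single letter $i$ by $i+1$ (or vice versa) for some $i\in\{0,1,\ldots,k-2\}$, or by replacing one factor $(k-1)(k-1)$ by $kk$ (or vice versa), in such a way that the resulting string is again a $k$-Pell string. $\Delta(G)$ denotes the maximum degree of $G$. *)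

theory Defs
  imports Main
begin

text \<open>k-Pell strings: words over the alphabet {0,...,k-1, kk}, written as lists of
  naturals over {0,...,k} in which the letter k only occurs in blocks kk.\<close>
inductive pell_string :: "nat \<Rightarrow> nat list \<Rightarrow> bool" for k :: nat where
  Nil: "pell_string k []"
| Letter: "i < k \<Longrightarrow> pell_string k w \<Longrightarrow> pell_string k (i # w)"
| Double: "pell_string k w \<Longrightarrow> pell_string k (k # k # w)"

definition pell_vertices :: "nat \<Rightarrow> nat \<Rightarrow> nat list set" where
  "pell_vertices n k = {w. pell_string k w \<and> length w = n}"

definition pell_step :: "nat \<Rightarrow> nat list \<Rightarrow> nat list \<Rightarrow> bool" where
  "pell_step k u v \<longleftrightarrow>
     (\<exists>x y i. i + 2 \<le> k \<and> u = x @ [i] @ y \<and> v = x @ [i + 1] @ y)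
   \<or> (\<exists>x y. u = x @ [k - 1, k - 1] @ y \<and> v = x @ [k, k] @ y)"

definition pell_adj :: "nat \<Rightarrow> nat list \<Rightarrow> nat list \<Rightarrow> bool" where
  "pell_adj k u v \<longleftrightarrow> pell_string k u \<and> pell_string k v \<and>
     (pell_step k u v \<or> pell_step k v u)"

definition pell_degree :: "nat \<Rightarrow> nat \<Rightarrow> nat list \<Rightarrow> nat" where
  "pell_degree n k u = card {v \<in> pell_vertices n k. pell_adj k u v}"

definition pell_max_degree :: "nat \<Rightarrow> nat \<Rightarrow> nat" where
  "pell_max_degree n k = Max (pell_degree n k ` pell_vertices n k)"

end

theory Submission
  imports Defs
begin

lemma ps_cons: "pell_string k (a#w) \<longleftrightarrow> (a<k \<and> pell_string k w) \<or> (a=k \<and> (\<exists>y. w = k#y \<and> pell_string k y))"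
  by (auto elim: pell_string.cases intro: pell_string.intros)

lemma step_Nil1: "\<not> pell_step k [] v" by (auto simp: pell_step_def)
lemma step_Nil2: "\<not> pell_step k v []" by (auto simp: pell_step_def)

lemma step_Cons: "pell_step k (a#u) (b#v) \<longleftrightarrow> (a=b \<and> pell_step k u v) \<or> (u=v \<and> b=a+1 \<and> a+2\<le>k)
   \<or> (a=k-1 \<and> b=k \<and> (\<exists>y. u=(k-1)#y \<and> v=k#y))"
proof
  assume "pell_step k (a#u) (b#v)"
  then have "(\<exists>x y i. i + 2 \<le> k \<and> a#u = x @ [i] @ y \<and> b#v = x @ [i + 1] @ y)
   \<or> (\<exists>x y. a#u = x @ [k - 1, k - 1] @ y \<and> b#v = x @ [k, k] @ y)" unfolding pell_step_def .
  then show "(a=b \<and> pell_step k u v) \<or> (u=v \<and> b=a+1 \<and> a+2\<le>k)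
   \<or> (a=k-1 \<and> b=k \<and> (\<exists>y. u=(k-1)#y \<and> v=k#y))"
  proof (elim disjE exE conjE)
    fix x y i assume h: "i + 2 \<le> k" "a # u = x @ [i] @ y" "b # v = x @ [i + 1] @ y"
    show ?thesis
    proof (cases x)
      case Nil then show ?thesis using h by auto
    next
      case (Cons c x') then show ?thesis using h by (auto simp: pell_step_def)
    qed
  next
    fix x y assume h: "a # u = x @ [k-1, k-1] @ y" "b # v = x @ [k, k] @ y"
    show ?thesis
    proof (cases x)
      case Nil then show ?thesis using h by auto
    next
      case (Cons c x') then show ?thesis using h by (auto simp: pell_step_def)
    qed
  qed
next
  assume "(a=b \<and> pell_step k u v) \<or> (u=v \<and> b=a+1 \<and> a+2\<le>k)
   \<or> (a=k-1 \<and> b=k \<and> (\<exists>y. u=(k-1)#y \<and> v=k#y))"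
  then show "pell_step k (a#u) (b#v)"
    unfolding pell_step_def
    by (elim disjE conjE exE; metis append_Cons append_Nil)
qed

lemma step_len: "pell_step k u v \<Longrightarrow> length u = length v"
  by (auto simp: pell_step_def)

lemma ps_set: "pell_string k u \<Longrightarrow> set u \<subseteq> {0..k}"
  by (induction rule: pell_string.induct) auto

lemma ps_mid: "set u \<subseteq> {1..k-2} \<Longrightarrow> k \<ge> 3 \<Longrightarrow> pell_string k u"
  by (induction u) (auto intro: pell_string.intros)

definition N :: "nat \<Rightarrow> nat list \<Rightarrow> nat list set" where
  "N k u = {v. pell_adj k u v}"

lemma N_Nil: "N k [] = {}"
  by (auto simp: N_def pell_adj_def step_Nil1 step_Nil2)

lemma N_Letter:
  assumes "a<k" "pell_string k w" "k\<ge>3"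
  shows "N k (a#w) = Cons a ` N k w \<union> {v. (a+1<k \<and> v=(a+1)#w) \<or> (0<a \<and> v=(a-1)#w) \<or> (a=k-1 \<and> (\<exists>y. w=(k-1)#y \<and> v = k#k#y))}"
proof (rule set_eqI)
  fix v show "v \<in> N k (a#w) \<longleftrightarrow> v \<in> Cons a ` N k w \<union> {v. (a+1<k \<and> v=(a+1)#w) \<or> (0<a \<and> v=(a-1)#w) \<or> (a=k-1 \<and> (\<exists>y. w=(k-1)#y \<and> v = k#k#y))}"
  proof (cases v)
    case Nil then show ?thesis by (auto simp: N_def pell_adj_def step_Nil1 step_Nil2)
  next
    case (Cons b v')
    show ?thesis using assms unfolding Cons N_def pell_adj_def
      by (auto simp: step_Cons ps_cons)
  qed
qed

lemma N_Double:
  assumes "pell_string k w" "k\<ge>3"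
  shows "N k (k#k#w) = Cons k ` Cons k ` N k w \<union> {(k-1)#(k-1)#w}"
proof (rule set_eqI)
  fix v show "v \<in> N k (k#k#w) \<longleftrightarrow> v \<in> Cons k ` Cons k ` N k w \<union> {(k-1)#(k-1)#w}"
  proof (cases v)
    case Nil then show ?thesis by (auto simp: N_def pell_adj_def step_Nil1 step_Nil2)
  next
    case (Cons b v1)
    show ?thesis
    proof (cases v1)
      case Nil then show ?thesis using assms unfolding Cons N_def pell_adj_def
        by (auto simp: step_Cons ps_cons step_Nil1 step_Nil2)
    next
      case (Cons c v2)
      show ?thesis using assms unfolding Cons \<open>v = b # v1\<close> N_def pell_adj_def
        by (auto simp: step_Cons ps_cons)
    qed
  qed
qed

fun dg :: "nat \<Rightarrow> nat list \<Rightarrow> nat" where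
  "dg k [] = 0"
| "dg k [a] = (if a = 0 then 1 else if a+1<k then 2 else 1)"
| "dg k (a#b#w) = (if a = k then 1 + dg k w else (if a = 0 then 1 else if a+1<k then 2 else if b = k-1 then 2 else 1) + dg k (b#w))"

definition cst :: "nat \<Rightarrow> nat \<Rightarrow> nat list \<Rightarrow> nat" where
  "cst k a w = (if a=0 then 1 else if a+1<k then 2 else if w \<noteq> [] \<and> hd w = k-1 then 2 else 1)"

lemma dg_cons: "a \<noteq> k \<Longrightarrow> dg k (a#w) = cst k a w + dg k w"
  by (cases w) (auto simp: cst_def)

lemma dg_kk: "dg k (k#k#w) = 1 + dg k w" by simp

lemma card_E:
  assumes "a<k" "k\<ge>3"
  shows "finite {v. (a+1<k \<and> v=(a+1)#w) \<or> (0<a \<and> v=(a-1)#w) \<or> (a=k-1 \<and> (\<exists>y. w=(k-1)#y \<and> v = k#k#y))}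
    \<and> card {v. (a+1<k \<and> v=(a+1)#w) \<or> (0<a \<and> v=(a-1)#w) \<or> (a=k-1 \<and> (\<exists>y. w=(k-1)#y \<and> v = k#k#y))} = cst k a w"
proof -
  let ?E = "{v. (a+1<k \<and> v=(a+1)#w) \<or> (0<a \<and> v=(a-1)#w) \<or> (a=k-1 \<and> (\<exists>y. w=(k-1)#y \<and> v = k#k#y))}"
  consider "a = 0" | "0 < a" "a+1<k" | "a = k-1" "w \<noteq> [] \<and> hd w = k-1" | "a = k-1" "\<not>(w \<noteq> [] \<and> hd w = k-1)"
    using assms by linarith
  then show ?thesis
  proof cases
    case 1
    then have "?E = {1#w}" using assms by auto
    then show ?thesis using 1 by (simp add: cst_def)
  next
    case 2
    then have "?E = {(a+1)#w, (a-1)#w}" using assms by auto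
    then show ?thesis using 2 by (simp add: cst_def)
  next
    case 3
    then obtain y where y: "w = (k-1)#y" by (cases w) auto
    then have "?E = {(k-2)#w, k#k#y}" using assms 3 by auto
    then show ?thesis using 3 assms y by (simp add: cst_def)
  next
    case 4
    then have "?E = {(k-2)#w}" using assms by auto
    then show ?thesis using 4 assms by (simp add: cst_def)
  qed
qed

lemma N_card: "pell_string k u \<Longrightarrow> k \<ge> 3 \<Longrightarrow> finite (N k u) \<and> card (N k u) = dg k u"
proof (induction rule: pell_string.induct)
  case Nil then show ?case by (simp add: N_Nil)
next
  case (Letter a w)
  let ?E = "{v. (a+1<k \<and> v=(a+1)#w) \<or> (0<a \<and> v=(a-1)#w) \<or> (a=k-1 \<and> (\<exists>y. w=(k-1)#y \<and> v = k#k#y))}"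
  have eq: "N k (a#w) = Cons a ` N k w \<union> ?E" using N_Letter Letter by blast
  have fin: "finite (N k w)" "card (N k w) = dg k w" using Letter by auto
  have E: "finite ?E" "card ?E = cst k a w" using card_E Letter by auto
  have disj: "Cons a ` N k w \<inter> ?E = {}" using Letter by auto
  have "card (N k (a#w)) = card (Cons a ` N k w) + card ?E"
    unfolding eq using fin E disj by (simp add: card_Un_disjoint)
  also have "card (Cons a ` N k w) = card (N k w)" by (simp add: card_image)
  finally show ?case using eq fin E Letter dg_cons[of a k w] by simp
next
  case (Double w)
  have eq: "N k (k#k#w) = Cons k ` Cons k ` N k w \<union> {(k-1)#(k-1)#w}" using N_Double Double by blast
  have fin: "finite (N k w)" "card (N k w) = dg k w" using Double by auto
  have disj: "(k-1)#(k-1)#w \<notin> Cons k ` Cons k ` N k w" using Double by auto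
  have "card (Cons k ` Cons k ` N k w) = card (N k w)" by (simp add: card_image image_image inj_on_def)
  then show ?case unfolding eq using fin disj by simp
qed

lemma dg_bound: "pell_string k u \<Longrightarrow> k \<ge> 3 \<Longrightarrow> dg k u + (if u\<noteq>[] \<and> hd u = k-1 then 1 else 0) \<le> 2*length u"
proof (induction rule: pell_string.induct)
  case Nil then show ?case by simp
next
  case (Letter a w)
  then show ?case using dg_cons[of a k w] by (auto simp: cst_def split: if_splits)
next
  case (Double w) then show ?case by simp
qed

lemma dg_eq: "pell_string k u \<Longrightarrow> k \<ge> 3 \<Longrightarrow> (dg k u = 2*length u) = (set u \<subseteq> {1..k-2})"
proof (induction rule: pell_string.induct)
  case Nil then show ?case by simp
next
  case (Letter a w)
  then show ?case using dg_cons[of a k w] dg_bound[OF Letter(2)] by (auto simp: cst_def split: if_splits)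
next
  case (Double w) then show ?case using dg_bound[OF Double(1)] by auto
qed

definition AA :: "nat \<Rightarrow> nat \<Rightarrow> nat list set" where
  "AA k n = {u. set u \<subseteq> {1..k-2} \<and> length u = n}"
definition BB :: "nat \<Rightarrow> nat \<Rightarrow> nat list set" where
  "BB k n = {u. pell_string k u \<and> length u = n \<and> dg k u + 1 = 2*n}"
definition SS :: "nat \<Rightarrow> nat \<Rightarrow> nat list set" where
  "SS k n = {u \<in> BB k n. u \<noteq> [] \<and> hd u = k-1}"

lemma fin_BB: "finite (BB k n)"
proof -
  have "BB k n \<subseteq> {u. set u \<subseteq> {0..k} \<and> length u = n}" using ps_set by (auto simp: BB_def)
  then show ?thesis using finite_lists_length_eq[of "{0..k}" n] finite_subset by blast
qed

lemma fin_SS: "finite (SS k n)" using fin_BB[of k n] by (simp add: SS_def)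

lemma card_AA: "card (AA k n) = (k-2)^n"
  unfolding AA_def using card_lists_length_eq[of "{1..k-2}" n] by simp

lemma fin_AA: "finite (AA k n)"
  unfolding AA_def using finite_lists_length_eq[of "{1..k-2}" n] by simp

lemma SS_Suc: assumes "k\<ge>3" shows "SS k (Suc n) = Cons (k-1) ` (SS k n \<union> AA k n)"
proof (rule set_eqI)
  fix u show "u \<in> SS k (Suc n) \<longleftrightarrow> u \<in> Cons (k-1) ` (SS k n \<union> AA k n)"
  proof
    assume u: "u \<in> SS k (Suc n)"
    then obtain w where w: "u = (k-1)#w" by (cases u) (auto simp: SS_def)
    have pw: "pell_string k w" using u w assms by (auto simp: SS_def BB_def ps_cons)
    have lw: "length w = n" using u w by (auto simp: SS_def BB_def)
    have d: "cst k (k-1) w + dg k w + 1 = 2 * Suc n" using u w dg_cons[of "k-1" k w] assms by (auto simp: SS_def BB_def)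
    have b: "dg k w + (if w\<noteq>[] \<and> hd w = k-1 then 1 else 0) \<le> 2*n" using dg_bound[OF pw assms] lw by simp
    show "u \<in> Cons (k-1) ` (SS k n \<union> AA k n)"
    proof (cases "w\<noteq>[] \<and> hd w = k-1")
      case True
      then have "w \<in> SS k n" using d pw lw assms by (auto simp: SS_def BB_def cst_def)
      then show ?thesis using w by auto
    next
      case False
      then have "dg k w = 2 * length w" using d lw assms by (auto simp: cst_def)
      then have "w \<in> AA k n" using dg_eq[OF pw assms] lw by (auto simp: AA_def)
      then show ?thesis using w by auto
    qed
  next
    assume "u \<in> Cons (k-1) ` (SS k n \<union> AA k n)"
    then obtain w where w: "u = (k-1)#w" "w \<in> SS k n \<or> w \<in> AA k n" by auto
    show "u \<in> SS k (Suc n)"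
    proof (cases "w \<in> SS k n")
      case True
      then show ?thesis using w assms dg_cons[of "k-1" k w]
        by (auto simp: SS_def BB_def cst_def intro: pell_string.intros)
    next
      case False
      then have A: "w \<in> AA k n" using w by auto
      then have pw: "pell_string k w" using ps_mid assms by (auto simp: AA_def)
      have "dg k w = 2*n" using A dg_eq[OF pw assms] by (auto simp: AA_def)
      moreover have "\<not>(w\<noteq>[] \<and> hd w = k-1)" using A assms by (cases w) (auto simp: AA_def)
      ultimately show ?thesis using w pw assms dg_cons[of "k-1" k w] A
        by (auto simp: SS_def BB_def cst_def AA_def intro: pell_string.intros)
    qed
  qed
qed

lemma BB_Suc: assumes "k\<ge>3"
  shows "BB k (Suc n) = Cons 0 ` AA k n \<union> (\<lambda>(a,w). a#w) ` ({1..k-2} \<times> BB k n) \<union> SS k (Suc n)"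
proof (rule set_eqI)
  fix u show "u \<in> BB k (Suc n) \<longleftrightarrow> u \<in> Cons 0 ` AA k n \<union> (\<lambda>(a,w). a#w) ` ({1..k-2} \<times> BB k n) \<union> SS k (Suc n)"
  proof
    assume u: "u \<in> BB k (Suc n)"
    then obtain a w where aw: "u = a#w" by (cases u) (auto simp: BB_def)
    have pu: "pell_string k u" and lu: "length w = n" and du: "dg k u + 1 = 2 * Suc n" using u aw by (auto simp: BB_def)
    show "u \<in> Cons 0 ` AA k n \<union> (\<lambda>(a,w). a#w) ` ({1..k-2} \<times> BB k n) \<union> SS k (Suc n)"
    proof (cases "a = k")
      case True
      then obtain y where y: "w = k#y" "pell_string k y" using pu aw by (auto simp: ps_cons)
      have "dg k y \<le> 2 * length y" using dg_bound[OF y(2) assms] by simp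
      then have False using du aw True y lu by simp
      then show ?thesis ..
    next
      case False
      then have a: "a < k" "pell_string k w" using pu aw by (auto simp: ps_cons)
      have d: "cst k a w + dg k w + 1 = 2 * Suc n" using du aw dg_cons[of a k w] False by simp
      have b: "dg k w \<le> 2*n" using dg_bound[OF a(2) assms] lu by simp
      consider "a = 0" | "1 \<le> a" "a \<le> k-2" | "a = k-1" using a by linarith
      then show ?thesis
      proof cases
        case 1
        then have "dg k w = 2 * length w" using d lu by (simp add: cst_def)
        then have "w \<in> AA k n" using dg_eq[OF a(2) assms] lu by (auto simp: AA_def)
        then show ?thesis using aw 1 by auto
      next
        case 2
        then have "a + 1 < k" using assms by linarith
        then have "dg k w + 1 = 2 * n" using d 2 by (simp add: cst_def)
        then have "w \<in> BB k n" using a lu by (simp add: BB_def)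
        then show ?thesis using aw 2 by force
      next
        case 3
        then show ?thesis using u aw by (simp add: SS_def)
      qed
    qed
  next
    assume "u \<in> Cons 0 ` AA k n \<union> (\<lambda>(a,w). a#w) ` ({1..k-2} \<times> BB k n) \<union> SS k (Suc n)"
    then consider (z) w where "u = 0#w" "w \<in> AA k n" | (m) a w where "u = a#w" "a \<in> {1..k-2}" "w \<in> BB k n"
      | (s) "u \<in> SS k (Suc n)" by auto
    then show "u \<in> BB k (Suc n)"
    proof cases
      case z
      then have pw: "pell_string k w" using ps_mid assms by (auto simp: AA_def)
      have "dg k w = 2*n" using z dg_eq[OF pw assms] by (auto simp: AA_def)
      then show ?thesis using z pw assms dg_cons[of 0 k w]
        by (auto simp: BB_def AA_def cst_def intro: pell_string.intros)
    next
      case m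
      then show ?thesis using assms dg_cons[of a k w]
        by (auto simp: BB_def cst_def intro: pell_string.intros)
    next
      case s then show ?thesis by (simp add: SS_def)
    qed
  qed
qed

lemma card_SS: assumes "k\<ge>3" shows "card (SS k n) = (\<Sum>j<n. (k-2)^j)"
proof (induction n)
  case 0
  have "SS k 0 = {}" by (auto simp: SS_def BB_def)
  then show ?case by simp
next
  case (Suc n)
  have disj: "SS k n \<inter> AA k n = {}"
  proof (rule ccontr)
    assume "SS k n \<inter> AA k n \<noteq> {}"
    then obtain u where u: "u \<in> SS k n" "u \<in> AA k n" by blast
    then have ne: "u \<noteq> []" and "hd u = k-1" by (auto simp: SS_def)
    moreover have "hd u \<in> set u" using ne by (rule hd_in_set)
    ultimately have "k-1 \<in> set u" by simp
    then have "k-1 \<in> {1..k-2}" using u(2) by (auto simp: AA_def)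
    then show False using assms by auto
  qed
  have "card (SS k (Suc n)) = card (SS k n \<union> AA k n)"
    unfolding SS_Suc[OF assms] by (simp add: card_image)
  also have "\<dots> = card (SS k n) + card (AA k n)" using disj fin_SS fin_AA by (simp add: card_Un_disjoint)
  finally show ?case using Suc card_AA by simp
qed

lemma card_BB_Suc: assumes "k\<ge>3"
  shows "card (BB k (Suc n)) = (k-2)^n + (k-2) * card (BB k n) + card (SS k (Suc n))"
proof -
  let ?P = "(\<lambda>(a,w). a#w) ` ({1..k-2} \<times> BB k n)"
  have inj: "inj_on (\<lambda>(a,w). a#w) ({1..k-2} \<times> BB k n)" by (auto simp: inj_on_def)
  have cP: "card ?P = (k-2) * card (BB k n)"
    using card_image[OF inj] by (simp add: card_cartesian_product)
  have fP: "finite ?P" using fin_BB by auto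
  have fZ: "finite (Cons 0 ` AA k n)" using fin_AA by auto
  have cZ: "card (Cons 0 ` AA k n) = (k-2)^n" using card_AA by (simp add: card_image)
  have d1: "Cons 0 ` AA k n \<inter> ?P = {}" by auto
  have d2: "(Cons 0 ` AA k n \<union> ?P) \<inter> SS k (Suc n) = {}" using assms by (auto simp: SS_def)
  show ?thesis unfolding BB_Suc[OF assms]
    using d1 d2 fP fZ fin_SS cP cZ by (simp add: card_Un_disjoint)
qed

lemma card_BB0: "card (BB k 0) = 0" by (simp add: BB_def)

lemma aux_sum: "(\<Sum>j<Suc n. j * (m::nat)^j) = m * (\<Sum>j<n. (j+1)*m^j)"
  by (induction n) (auto simp: algebra_simps)

lemma aux_e1: "(m::nat) * (n*m^(n-1)) = n * m^n"
  by (cases n) (simp_all add: mult.commute mult.left_commute)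

lemma card_BB: assumes "k\<ge>3" shows "card (BB k n) = n*(k-2)^(n-1) + (\<Sum>j<n. (j+1)*(k-2)^j)"
proof (induction n)
  case 0 then show ?case by (simp add: card_BB0)
next
  case (Suc n)
  let ?m = "k-2"
  have e1: "?m * (n*?m^(n-1)) = n * ?m^n" by (rule aux_e1)
  have e2: "(\<Sum>j<Suc n. (j+1)*?m^j) = (\<Sum>j<Suc n. ?m^j) + ?m * (\<Sum>j<n. (j+1)*?m^j)"
    using aux_sum[of n ?m] aux_sum[where n=n and m="?m"] by (simp add: sum.distrib)
  show ?case using card_BB_Suc[OF assms, of n] Suc card_SS[OF assms, of "Suc n"] e1 e2
    by (simp add: algebra_simps)
qed

lemma reidx: "(\<Sum>l = 1..n. (n - l + 1) * (m::nat) ^ (n - l)) = (\<Sum>j<n. (j+1)*m^j)"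
  by (rule sum.reindex_bij_witness[of _ "\<lambda>j. n - j" "\<lambda>l. n - l"]) auto

lemma deg_eq: assumes "u \<in> pell_vertices n k" "k\<ge>3" shows "pell_degree n k u = dg k u"
proof -
  have "{v \<in> pell_vertices n k. pell_adj k u v} = N k u"
    using assms by (auto simp: pell_vertices_def N_def pell_adj_def dest: step_len)
  then show ?thesis using N_card[of k u] assms by (simp add: pell_degree_def pell_vertices_def)
qed

lemma fin_V: "finite (pell_vertices n k)"
proof -
  have "pell_vertices n k \<subseteq> {u. set u \<subseteq> {0..k} \<and> length u = n}" using ps_set by (auto simp: pell_vertices_def)
  then show ?thesis using finite_lists_length_eq[of "{0..k}" n] finite_subset by blast
qed

lemma maxdeg: assumes "k\<ge>3" shows "pell_max_degree n k = 2*n"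
proof -
  have img: "pell_degree n k ` pell_vertices n k = dg k ` pell_vertices n k"
    using deg_eq[OF _ assms] by (auto simp: image_def)
  have s: "set (replicate n (1::nat)) \<subseteq> {1..k-2}" using assms by auto
  have r: "replicate n 1 \<in> pell_vertices n k" using ps_mid[OF s] assms
    by (auto simp: pell_vertices_def)
  have r2: "dg k (replicate n 1) = 2*n" using dg_eq[of k "replicate n 1"] r assms by (auto simp: pell_vertices_def)
  show ?thesis unfolding pell_max_degree_def img
  proof (rule Max_eqI)
    show "finite (dg k ` pell_vertices n k)" using fin_V by simp
    show "y \<le> 2*n" if "y \<in> dg k ` pell_vertices n k" for y
      using that dg_bound[of k, OF _ assms] by (fastforce simp: pell_vertices_def)
    show "2*n \<in> dg k ` pell_vertices n k" using r r2 by (metis imageI)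
  qed
qed

theorem corollary5p6:
  fixes n k :: nat
  assumes "n \<ge> 1" and "k \<ge> 3"
  shows "pell_max_degree n k - 1 = 2 * n - 1 \<and>
         card {u \<in> pell_vertices n k. pell_degree n k u = pell_max_degree n k - 1}
           = n * (k - 2) ^ (n - 1) + (\<Sum>l = 1..n. (n - l + 1) * (k - 2) ^ (n - l))"
proof
  show "pell_max_degree n k - 1 = 2 * n - 1" using maxdeg[OF assms(2)] by simp
  have "{u \<in> pell_vertices n k. pell_degree n k u = pell_max_degree n k - 1} = BB k n"
    using maxdeg[OF assms(2)] deg_eq[OF _ assms(2)] assms(1)
    by (auto simp: BB_def pell_vertices_def)
  then show "card {u \<in> pell_vertices n k. pell_degree n k u = pell_max_degree n k - 1}
           = n * (k - 2) ^ (n - 1) + (\<Sum>l = 1..n. (n - l + 1) * (k - 2) ^ (n - l))"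
    using card_BB[OF assms(2), of n] reidx[of n "k-2"] by simp
qed

end
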